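(* Let $\mathcal H$ be a family of graphs. The following are equivalent: (i) there are constants $c_1=c_1(\mathcal H)$ and $c_2=c_2(\mathcal H)$ such that every $\mathcal H$-free graph $G$ has fewer than $c_2$ vertices $v$ with $\mathrm{sdeg}(v)\ge c_1$; (ii) there is a positive integer $n$ such that $\mathcal H\le\{nK_{1,n},\ G_n\}$.
   Context: All graphs are finite, simple, undirected. For graphs $H_1,H_2$, write $H_1\prec H_2$ if $H_2$ contains an induced subgraph isomorphic to $H_1$. A graph $G$ is $\mathcal H$-free if no $H\in\mathcal H$ satisfies $H\prec G$. For families $\mathcal H_1,\mathcal H_2$, write $\mathcal H_1\le\mathcal H_2$ if for every $H_2\in\mathcal H_2$ there is $H_1\in\mathcal H_1$ with $H_1\prec H_2$. For a vertex $v$ of $G$, the sharp degree is $\mathrm{sdeg}(v)=c(G-v)-c(G)+1$, where $c(\cdot)$ is the number of connected components. $K_{1,n}$ is the star with $n$ leaves, $nG$ the disjoint union of $n$ copies of $G$, and $G_n$ is the graph obtained from $K_n$ by attaching $n$ new pendant vertices to each vertex of $K_n$. *)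

theory Defs
  imports Main
begin

text \<open>Finite simple graphs on natural-number vertices: a vertex set and a set of
  2-element edges. Every finite graph is isomorphic to one of this form.\<close>

type_synonym graph = "nat set \<times> nat set set"

definition verts :: "graph \<Rightarrow> nat set" where "verts G = fst G"
definition edges :: "graph \<Rightarrow> nat set set" where "edges G = snd G"

definition wf_graph :: "graph \<Rightarrow> bool" where
  "wf_graph G \<longleftrightarrow> finite (verts G) \<and>
     (\<forall>e\<in>edges G. \<exists>u v. e = {u, v} \<and> u \<noteq> v \<and> u \<in> verts G \<and> v \<in> verts G)"

definition induced_sub :: "graph \<Rightarrow> graph \<Rightarrow> bool" (infix "\<prec>" 50) where
  "H1 \<prec> H2 \<longleftrightarrow> (\<exists>f. inj_on f (verts H1) \<and> f ` verts H1 \<subseteq> verts H2 \<and>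
     (\<forall>u\<in>verts H1. \<forall>v\<in>verts H1. {u, v} \<in> edges H1 \<longleftrightarrow> {f u, f v} \<in> edges H2))"

definition H_free :: "graph set \<Rightarrow> graph \<Rightarrow> bool" where
  "H_free \<H> G \<longleftrightarrow> \<not> (\<exists>H\<in>\<H>. H \<prec> G)"

definition fam_le :: "graph set \<Rightarrow> graph set \<Rightarrow> bool" where
  "fam_le \<H>1 \<H>2 \<longleftrightarrow> (\<forall>H2\<in>\<H>2. \<exists>H1\<in>\<H>1. H1 \<prec> H2)"

definition adj :: "graph \<Rightarrow> nat \<Rightarrow> nat \<Rightarrow> bool" where
  "adj G u v \<longleftrightarrow> u \<in> verts G \<and> v \<in> verts G \<and> {u, v} \<in> edges G"

definition conn_rel :: "graph \<Rightarrow> (nat \<times> nat) set" where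
  "conn_rel G = {(u, v). u \<in> verts G \<and> v \<in> verts G \<and> (adj G)\<^sup>*\<^sup>* u v}"

definition ncomp :: "graph \<Rightarrow> nat" where
  "ncomp G = card (verts G // conn_rel G)"

definition del_vertex :: "graph \<Rightarrow> nat \<Rightarrow> graph" where
  "del_vertex G v = (verts G - {v}, {e \<in> edges G. v \<notin> e})"

definition sdeg :: "graph \<Rightarrow> nat \<Rightarrow> int" where
  "sdeg G v = int (ncomp (del_vertex G v)) - int (ncomp G) + 1"

text \<open>n K_{1,n}: copy i has centre i*(n+1) and leaves i*(n+1)+j, 1 \<le> j \<le> n.\<close>
definition stars :: "nat \<Rightarrow> graph" where
  "stars n = ({0..<n * (n + 1)},
     {{i * (n + 1), i * (n + 1) + j} | i j. i < n \<and> 1 \<le> j \<and> j \<le> n})"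

text \<open>G_n: clique on 0..n-1; vertex i gets pendant vertices n + i*n + j, j < n.\<close>
definition Gn :: "nat \<Rightarrow> graph" where
  "Gn n = ({0..<n + n * n},
     {{i, k} | i k. i < n \<and> k < n \<and> i \<noteq> k} \<union>
     {{i, n + i * n + j} | i j. i < n \<and> j < n})"

end

theory Submission
  imports Defs "HOL-Library.Ramsey"
begin


lemma adj_sym: "adj G u v \<Longrightarrow> adj G v u"
  by (auto simp: adj_def insert_commute)

lemma adj_wf: "wf_graph G \<Longrightarrow> adj G u v \<Longrightarrow> u \<noteq> v"
  unfolding wf_graph_def adj_def
  by (metis doubleton_eq_iff insert_absorb2)

lemma reach_sym: "(adj G)\<^sup>*\<^sup>* u v \<Longrightarrow> (adj G)\<^sup>*\<^sup>* v u"
  by (induction rule: rtranclp.induct) (auto intro: converse_rtranclp_into_rtranclp adj_sym)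

lemma reach_verts: "(adj G)\<^sup>*\<^sup>* u v \<Longrightarrow> u \<in> verts G \<Longrightarrow> v \<in> verts G"
  by (induction rule: rtranclp.induct) (auto simp: adj_def)

lemma equiv_conn: "equiv (verts G) (conn_rel G)"
  unfolding equiv_def refl_on_def sym_def trans_def conn_rel_def
  by (auto intro: reach_sym rtranclp_trans)

lemma adj_del: "adj (del_vertex G v) a b \<longleftrightarrow> adj G a b \<and> a \<noteq> v \<and> b \<noteq> v"
  by (auto simp: adj_def del_vertex_def verts_def edges_def)

lemma verts_del: "verts (del_vertex G v) = verts G - {v}"
  by (simp add: del_vertex_def verts_def)

lemma conn_Image: "x \<in> verts G \<Longrightarrow> conn_rel G `` {x} = {y. (adj G)\<^sup>*\<^sup>* x y}"
  using reach_verts[of G x] by (auto simp: conn_rel_def)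

lemma reach_del_ne: "(adj (del_vertex G v))\<^sup>*\<^sup>* x y \<Longrightarrow> x \<noteq> v \<Longrightarrow> y \<noteq> v"
  by (induction rule: rtranclp.induct) (auto simp: adj_del)

lemma reach_del_mono: "(adj (del_vertex G v))\<^sup>*\<^sup>* x y \<Longrightarrow> (adj G)\<^sup>*\<^sup>* x y"
  by (induction rule: rtranclp.induct) (auto simp: adj_del intro: rtranclp.rtrancl_into_rtrancl)

lemma lift:
  assumes "x \<noteq> v" "\<forall>z. (adj (del_vertex G v))\<^sup>*\<^sup>* x z \<longrightarrow> \<not> adj G v z"
  shows "(adj G)\<^sup>*\<^sup>* x y \<Longrightarrow> (adj (del_vertex G v))\<^sup>*\<^sup>* x y"
proof (induction rule: rtranclp_induct)
  case base then show ?case by simp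
next
  case (step y z)
  have "y \<noteq> v" using reach_del_ne[OF step.IH assms(1)] .
  moreover have "z \<noteq> v" using assms(2) step.IH step.hyps(2) adj_sym by blast
  ultimately have "adj (del_vertex G v) y z" using step.hyps(2) by (simp add: adj_del)
  then show ?case by (meson rtranclp.rtrancl_into_rtrancl step.IH)
qed

lemma sdeg_card:
  assumes wf: "wf_graph G" and vV: "v \<in> verts G"
  shows "sdeg G v = int (card {C \<in> (verts G - {v}) // conn_rel (del_vertex G v). \<exists>x\<in>C. adj G v x})"
proof -
  define V where "V = verts G"
  define G' where "G' = del_vertex G v"
  define R where "R = conn_rel G"
  define R' where "R' = conn_rel G'"
  define Q where "Q = V // R"
  define Q' where "Q' = (V - {v}) // R'"
  define N where "N = {C \<in> Q'. \<exists>x\<in>C. adj G v x}"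
  have vG': "verts G' = V - {v}" by (simp add: G'_def V_def verts_del)
  have eqR: "equiv V R" using equiv_conn V_def R_def by simp
  have eqR': "equiv (V - {v}) R'" using equiv_conn[of G'] vG' R'_def by simp
  have finV: "finite V" using wf by (simp add: wf_graph_def V_def)
  have finQ: "finite Q" unfolding Q_def
    by (rule finite_quotient[OF finV]) (auto simp: R_def conn_rel_def V_def)
  have finQ': "finite Q'" unfolding Q'_def
    by (rule finite_quotient) (use finV vG' in \<open>auto simp: R'_def conn_rel_def\<close>)
  have key: "Q' - N = Q - {R `` {v}}"
  proof
    show "Q' - N \<subseteq> Q - {R `` {v}}"
    proof
      fix C assume C: "C \<in> Q' - N"
      then obtain x where x: "x \<in> V - {v}" "C = R' `` {x}" unfolding Q'_def by (auto elim: quotientE)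
      have Ceq: "C = {y. (adj G')\<^sup>*\<^sup>* x y}" using x conn_Image[of x G'] vG' R'_def by simp
      have noadj: "\<forall>z. (adj G')\<^sup>*\<^sup>* x z \<longrightarrow> \<not> adj G v z" using C Ceq N_def by auto
      have "C = {y. (adj G)\<^sup>*\<^sup>* x y}"
        using lift[of x v G] noadj x Ceq reach_del_mono[of G v x] G'_def by auto
      also have "\<dots> = R `` {x}" using conn_Image[of x G] x V_def R_def by simp
      finally have CR: "C = R `` {x}" .
      then have "C \<in> Q" using x Q_def by (auto intro: quotientI)
      moreover have "v \<in> R `` {v}" using vV eqR V_def by (auto simp: equiv_def refl_on_def)
      moreover have "v \<notin> C" using Ceq reach_del_ne[of G v x] x G'_def by auto
      ultimately show "C \<in> Q - {R `` {v}}" by auto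
    qed
  next
    show "Q - {R `` {v}} \<subseteq> Q' - N"
    proof
      fix C assume C: "C \<in> Q - {R `` {v}}"
      then obtain x where x: "x \<in> V" "C = R `` {x}" unfolding Q_def by (auto elim: quotientE)
      have CR: "C = {y. (adj G)\<^sup>*\<^sup>* x y}" using x conn_Image[of x G] V_def R_def by simp
      have xv: "x \<noteq> v" using C x by auto
      have noadj: "\<not> adj G v z" if "z \<in> C" for z
      proof
        assume a: "adj G v z"
        have "(adj G)\<^sup>*\<^sup>* x v" using that CR adj_sym[OF a]
          by (metis (mono_tags) mem_Collect_eq rtranclp.rtrancl_into_rtrancl)
        then have "(x, v) \<in> R" using x vV V_def R_def conn_rel_def by auto
        then have "R `` {x} = R `` {v}" using eqR by (simp add: equiv_class_eq)
        then show False using C x by auto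
      qed
      have "C = {y. (adj G')\<^sup>*\<^sup>* x y}"
        using lift[of x v G] noadj xv CR reach_del_mono[of G v x] G'_def by auto
      also have "\<dots> = R' `` {x}" using conn_Image[of x G'] x xv vG' R'_def by simp
      finally have "C = R' `` {x}" .
      then have "C \<in> Q'" using x xv Q'_def by (auto intro: quotientI)
      then show "C \<in> Q' - N" using noadj N_def by auto
    qed
  qed
  have NQ: "N \<subseteq> Q'" using N_def by auto
  have cQ': "card Q' = card N + card (Q' - N)"
    using NQ finQ' by (metis card_Diff_subset card_mono le_add_diff_inverse finite_subset)
  have cvQ: "R `` {v} \<in> Q" using vV V_def Q_def by (auto intro: quotientI)
  have "card (Q - {R `` {v}}) = card Q - 1" using cvQ finQ by simp
  moreover have "card Q \<ge> 1" using cvQ finQ by (metis One_nat_def Suc_leI card_gt_0_iff empty_iff)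
  ultimately have "card Q' = card N + card Q - 1" using cQ' key by simp
  moreover have "ncomp (del_vertex G v) = card Q'"
    using vG' by (simp add: ncomp_def Q'_def R'_def G'_def)
  moreover have "ncomp G = card Q" by (simp add: ncomp_def Q_def R_def V_def)
  ultimately show ?thesis using \<open>card Q \<ge> 1\<close> by (simp add: sdeg_def N_def Q'_def R'_def G'_def V_def)
qed


lemma pick_leaves:
  assumes wf: "wf_graph G" and vV: "v \<in> verts G" and sd: "sdeg G v \<ge> int c"
  shows "\<exists>L. finite L \<and> card L \<ge> c \<and> (\<forall>x\<in>L. adj G v x) \<and>
           (\<forall>x\<in>L. \<forall>y\<in>L. x \<noteq> y \<longrightarrow> \<not> (adj (del_vertex G v))\<^sup>*\<^sup>* x y)"
proof -
  define G' where "G' = del_vertex G v"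
  define R' where "R' = conn_rel G'"
  define N where "N = {C \<in> (verts G - {v}) // R'. \<exists>x\<in>C. adj G v x}"
  have eqR': "equiv (verts G - {v}) R'" using equiv_conn[of G'] verts_del R'_def G'_def by simp
  have finV: "finite (verts G)" using wf by (simp add: wf_graph_def)
  have finN: "finite N" unfolding N_def
    by (rule finite_subset[OF _ finite_quotient[of "verts G - {v}" R']])
       (use finV in \<open>auto simp: R'_def conn_rel_def G'_def verts_del\<close>)
  have cN: "card N \<ge> c" using sdeg_card[OF wf vV] sd N_def R'_def G'_def by simp
  define r where "r C = (SOME x. x \<in> C \<and> adj G v x)" for C
  have r: "r C \<in> C \<and> adj G v (r C)" if "C \<in> N" for C
    using that unfolding N_def r_def by (metis (mono_tags, lifting) mem_Collect_eq someI)
  have inj: "inj_on r N"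
  proof (rule inj_onI)
    fix C D assume CD: "C \<in> N" "D \<in> N" "r C = r D"
    have CQ: "C \<in> (verts G - {v}) // R'" "D \<in> (verts G - {v}) // R'" using CD(1,2) unfolding N_def by blast+
    have rC: "r C \<in> C" using r[OF CD(1)] by (rule conjunct1)
    have rD: "r D \<in> D" using r[OF CD(2)] by (rule conjunct1)
    have "C \<inter> D \<noteq> {}" using rC rD CD(3) by (metis disjoint_iff)
    then show "C = D" using quotient_disj[OF eqR' CQ] by (rule_tac ccontr) simp
  qed
  have sep: "\<not> (adj G')\<^sup>*\<^sup>* (r C) (r D)" if "C \<in> N" "D \<in> N" "r C \<noteq> r D" for C D
  proof
    assume a: "(adj G')\<^sup>*\<^sup>* (r C) (r D)"
    have CQ: "C \<in> (verts G - {v}) // R'" "D \<in> (verts G - {v}) // R'" using that N_def by auto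
    have "r C \<in> verts G - {v}" using r that(1) CQ(1) eqR' by (meson in_quotient_imp_subset subsetD)
    moreover have "r D \<in> verts G - {v}" using r that(2) CQ(2) eqR' by (meson in_quotient_imp_subset subsetD)
    ultimately have "(r C, r D) \<in> R'" using a by (simp add: R'_def conn_rel_def G'_def verts_del)
    then have "r D \<in> C" using in_quotient_imp_closed[OF eqR' CQ(1)] r that(1) by blast
    then have "C = D" using quotient_disj[OF eqR' CQ] r that(2) by blast
    then show False using that(3) by simp
  qed
  have f1: "finite (r ` N)" using finN by simp
  have f2: "card (r ` N) \<ge> c" using card_image[OF inj] cN by simp
  have f3: "\<forall>x\<in>r ` N. adj G v x" using r by blast
  have f4: "\<forall>x\<in>r ` N. \<forall>y\<in>r ` N. x \<noteq> y \<longrightarrow> \<not> (adj (del_vertex G v))\<^sup>*\<^sup>* x y"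
  proof (intro ballI impI)
    fix x y assume xy: "x \<in> r ` N" "y \<in> r ` N" "x \<noteq> y"
    then obtain C D where "C \<in> N" "D \<in> N" "x = r C" "y = r D" by blast
    then show "\<not> (adj (del_vertex G v))\<^sup>*\<^sup>* x y" using sep xy(3) unfolding G'_def by blast
  qed
  show ?thesis using f1 f2 f3 f4 by blast
qed

lemma leaves_sdeg:
  assumes wf: "wf_graph G" and vV: "v \<in> verts G" and finL: "finite L"
    and adjL: "\<forall>x\<in>L. adj G v x"
    and sepL: "\<forall>x\<in>L. \<forall>y\<in>L. x \<noteq> y \<longrightarrow> \<not> (adj (del_vertex G v))\<^sup>*\<^sup>* x y"
  shows "sdeg G v \<ge> int (card L)"
proof -
  define G' where "G' = del_vertex G v"
  define R' where "R' = conn_rel G'"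
  define N where "N = {C \<in> (verts G - {v}) // R'. \<exists>x\<in>C. adj G v x}"
  have eqR': "equiv (verts G - {v}) R'" using equiv_conn[of G'] verts_del R'_def G'_def by simp
  have finV: "finite (verts G)" using wf by (simp add: wf_graph_def)
  have finN: "finite N" unfolding N_def
    by (rule finite_subset[OF _ finite_quotient[of "verts G - {v}" R']])
       (use finV in \<open>auto simp: R'_def conn_rel_def G'_def verts_del\<close>)
  have LV: "x \<in> verts G - {v}" if "x \<in> L" for x
    using adjL that adj_wf[OF wf, of v x] by (auto simp: adj_def)
  have mapN: "R' `` {x} \<in> N" if "x \<in> L" for x
  proof -
    have "x \<in> R' `` {x}" using LV[OF that] eqR' by (auto simp: equiv_def refl_on_def)
    then show ?thesis using LV[OF that] adjL that unfolding N_def by (auto intro: quotientI)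
  qed
  have inj: "inj_on (\<lambda>x. R' `` {x}) L"
  proof (rule inj_onI)
    fix x y assume xy: "x \<in> L" "y \<in> L" "R' `` {x} = R' `` {y}"
    then have "(x, y) \<in> R'" using eq_equiv_class_iff[OF eqR' LV[OF xy(1)] LV[OF xy(2)]] by simp
    then have "(adj G')\<^sup>*\<^sup>* x y" by (simp add: R'_def conn_rel_def)
    then show "x = y" using sepL xy G'_def by blast
  qed
  have "card L \<le> card N"
    using card_inj_on_le[OF inj _ finN] mapN by auto
  then show ?thesis using sdeg_card[OF wf vV] N_def R'_def G'_def by simp
qed



lemma induced_trans: "induced_sub H1 H2 \<Longrightarrow> induced_sub H2 H3 \<Longrightarrow> induced_sub H1 H3"
  unfolding induced_sub_def
proof (elim exE conjE)
  fix f g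
  assume f: "inj_on f (verts H1)" "f ` verts H1 \<subseteq> verts H2"
     "\<forall>u\<in>verts H1. \<forall>v\<in>verts H1. ({u, v} \<in> edges H1) = ({f u, f v} \<in> edges H2)"
  assume g: "inj_on g (verts H2)" "g ` verts H2 \<subseteq> verts H3"
     "\<forall>u\<in>verts H2. \<forall>v\<in>verts H2. ({u, v} \<in> edges H2) = ({g u, g v} \<in> edges H3)"
  show "\<exists>h. inj_on h (verts H1) \<and> h ` verts H1 \<subseteq> verts H3 \<and>
        (\<forall>u\<in>verts H1. \<forall>v\<in>verts H1. ({u, v} \<in> edges H1) = ({h u, h v} \<in> edges H3))"
    apply (rule exI[of _ "g \<circ> f"])
    using f g by (auto simp: comp_inj_on inj_on_subset image_subset_iff)
qed

lemma aux_lt: "i < n \<Longrightarrow> j < (m::nat) \<Longrightarrow> i*m + j < n*m"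
proof -
  assume a: "i < n" "j < m"
  have "(i+1)*m \<le> n*m" using a by (intro mult_le_mono1) simp
  then show ?thesis using a by simp
qed

lemma dm: "j < (m::nat) \<Longrightarrow> (i*m + j) div m = i \<and> (i*m + j) mod m = j"
  by simp

lemma stars_edge:
  assumes p: "p < n*(n+1)" and q: "q < n*(n+1)"
  shows "{p,q} \<in> edges (stars n) \<longleftrightarrow>
    p div (n+1) = q div (n+1) \<and> ((p mod (n+1) = 0) \<noteq> (q mod (n+1) = 0))"
proof
  assume "{p,q} \<in> edges (stars n)"
  then obtain i j where ij: "{p,q} = {i*(n+1), i*(n+1)+j}" "1 \<le> j" "j \<le> n"
    by (auto simp: stars_def edges_def)
  have A: "(i*(n+1)) div (n+1) = i" "(i*(n+1)) mod (n+1) = 0" using dm[of 0 "n+1" i] by simp_all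
  have B: "(i*(n+1)+j) div (n+1) = i" "(i*(n+1)+j) mod (n+1) = j" using dm[of j "n+1" i] ij by auto
  from ij(1) have "(p = i*(n+1) \<and> q = i*(n+1)+j) \<or> (q = i*(n+1) \<and> p = i*(n+1)+j)"
    by (auto simp: doubleton_eq_iff)
  then show "p div (n+1) = q div (n+1) \<and> ((p mod (n+1) = 0) \<noteq> (q mod (n+1) = 0))"
    using A B ij by auto
next
  assume a: "p div (n+1) = q div (n+1) \<and> ((p mod (n+1) = 0) \<noteq> (q mod (n+1) = 0))"
  have gen: "{a, b} \<in> edges (stars n)" if "a < n*(n+1)" "a div (n+1) = b div (n+1)"
    "a mod (n+1) = 0" "b mod (n+1) \<noteq> 0" for a b
  proof -
    define i where "i = a div (n+1)"
    define j where "j = b mod (n+1)"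
    have i: "i < n" using that(1) by (simp add: i_def less_mult_imp_div_less)
    have a_eq: "a = i*(n+1)" using that(3) div_mult_mod_eq[of a "n+1"] i_def by simp
    have b_eq: "b = i*(n+1) + j" using that(2) div_mult_mod_eq[of b "n+1"] i_def j_def by simp
    have jle: "j \<le> n" "1 \<le> j" using mod_less_divisor[of "n+1" b] that(4) j_def by simp_all
    have "{a,b} = {i*(n+1), i*(n+1) + j} \<and> i < n \<and> 1 \<le> j \<and> j \<le> n"
      using a_eq b_eq i jle by simp
    then show ?thesis unfolding stars_def edges_def snd_conv by blast
  qed
  show "{p,q} \<in> edges (stars n)"
  proof (cases "p mod (n+1) = 0")
    case True then show ?thesis using gen[of p q] a p by auto
  next
    case False then show ?thesis using gen[of q p] a q by (auto simp: insert_commute)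
  qed
qed

lemma Gn_edge:
  assumes p: "p < n + n*n" and q: "q < n + n*n"
  shows "{p,q} \<in> edges (Gn n) \<longleftrightarrow>
    (p < n \<and> q < n \<and> p \<noteq> q) \<or> (p < n \<and> n \<le> q \<and> (q-n) div n = p) \<or> (q < n \<and> n \<le> p \<and> (p-n) div n = q)"
proof
  assume "{p,q} \<in> edges (Gn n)"
  then consider (a) i k where "{p,q} = {i,k}" "i < n" "k < n" "i \<noteq> k"
    | (b) i j where "{p,q} = {i, n + i*n + j}" "i < n" "j < n"
    by (auto simp: Gn_def edges_def)
  then show "(p < n \<and> q < n \<and> p \<noteq> q) \<or> (p < n \<and> n \<le> q \<and> (q-n) div n = p) \<or> (q < n \<and> n \<le> p \<and> (p-n) div n = q)"
  proof cases
    case a then show ?thesis by (auto simp: doubleton_eq_iff)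
  next
    case b
    have "(n + i*n + j - n) div n = i" using dm[of j n i] b by simp
    then show ?thesis using b by (auto simp: doubleton_eq_iff)
  qed
next
  assume a: "(p < n \<and> q < n \<and> p \<noteq> q) \<or> (p < n \<and> n \<le> q \<and> (q-n) div n = p) \<or> (q < n \<and> n \<le> p \<and> (p-n) div n = q)"
  have gen: "{a, b} \<in> edges (Gn n)" if "a < n" "n \<le> b" "(b-n) div n = a" for a b
  proof -
    define j where "j = (b-n) mod n"
    have "b = n + a*n + j" using that j_def by (metis div_mult_mod_eq le_add_diff_inverse add.assoc)
    moreover have "j < n" using that(1) j_def by simp
    ultimately have "{a, b} = {a, n + a*n + j} \<and> a < n \<and> j < n" using that(1) by simp
    then show ?thesis unfolding Gn_def edges_def snd_conv by blast
  qed
  from a consider "p < n \<and> q < n \<and> p \<noteq> q" | "p < n \<and> n \<le> q \<and> (q-n) div n = p" | "q < n \<and> n \<le> p \<and> (p-n) div n = q"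
    by blast
  then show "{p,q} \<in> edges (Gn n)"
  proof cases
    case 1 then show ?thesis by (auto simp: Gn_def edges_def)
  next
    case 2 then show ?thesis using gen by blast
  next
    case 3 then show ?thesis using gen[of q p] by (auto simp: insert_commute)
  qed
qed

lemma wf_stars: "wf_graph (stars n)"
  unfolding wf_graph_def
proof (intro conjI ballI)
  show "finite (verts (stars n))" by (simp add: stars_def verts_def)
  fix e assume "e \<in> edges (stars n)"
  then obtain i j where ij: "e = {i*(n+1), i*(n+1)+j}" "i < n" "1 \<le> j" "j \<le> n"
    by (auto simp: stars_def edges_def)
  have "i*(n+1)+j < n*(n+1)" using aux_lt[of i n j "n+1"] ij by simp
  moreover have "i*(n+1) < n*(n+1)" using aux_lt[of i n 0 "n+1"] ij by simp
  ultimately show "\<exists>u v. e = {u, v} \<and> u \<noteq> v \<and> u \<in> verts (stars n) \<and> v \<in> verts (stars n)"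
    using ij by (intro exI[of _ "i*(n+1)"] exI[of _ "i*(n+1)+j"]) (auto simp: stars_def verts_def)
qed

lemma wf_Gn: "wf_graph (Gn n)"
  unfolding wf_graph_def
proof (intro conjI ballI)
  show "finite (verts (Gn n))" by (simp add: Gn_def verts_def)
  fix e assume "e \<in> edges (Gn n)"
  then consider (a) i k where "e = {i,k}" "i < n" "k < n" "i \<noteq> k"
    | (b) i j where "e = {i, n + i*n + j}" "i < n" "j < n"
    by (auto simp: Gn_def edges_def)
  then show "\<exists>u v. e = {u, v} \<and> u \<noteq> v \<and> u \<in> verts (Gn n) \<and> v \<in> verts (Gn n)"
  proof cases
    case a then show ?thesis by (intro exI[of _ i] exI[of _ k]) (auto simp: Gn_def verts_def)
  next
    case b
    have "i*n + j < n*n" using aux_lt[of i n j n] b by simp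
    then show ?thesis using b by (intro exI[of _ i] exI[of _ "n + i*n + j"]) (auto simp: Gn_def verts_def)
  qed
qed



lemma edge_adj: "wf_graph G \<Longrightarrow> {p,q} \<in> edges G \<longleftrightarrow> adj G p q"
  unfolding wf_graph_def adj_def by (metis doubleton_eq_iff)

lemma sepA:
  assumes wf: "wf_graph G" and vw: "v \<noteq> w" and a: "adj G v x"
    and nr: "\<not> (adj (del_vertex G v))\<^sup>*\<^sup>* x w"
  shows "x \<noteq> w \<and> \<not> adj G x w"
proof
  show "x \<noteq> w" using nr by auto
  show "\<not> adj G x w"
  proof
    assume "adj G x w"
    moreover have "x \<noteq> v" using adj_wf[OF wf a] by simp
    ultimately have "adj (del_vertex G v) x w" using vw by (simp add: adj_del)
    then show False using nr by auto
  qed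
qed

lemma sepB:
  assumes wf: "wf_graph G" and vw: "v \<noteq> w" and a: "adj G v x"
    and nr: "\<not> (adj (del_vertex G v))\<^sup>*\<^sup>* x w"
    and b: "adj G w y" and nr2: "\<not> (adj (del_vertex G w))\<^sup>*\<^sup>* y v"
  shows "x \<noteq> y \<and> \<not> adj G x y"
proof -
  have yv: "y \<noteq> v" using sepA[OF wf _ b nr2] vw by auto
  have xv: "x \<noteq> v" using adj_wf[OF wf a] by simp
  have yw: "adj (del_vertex G v) y w" using adj_sym[OF b] yv vw by (simp add: adj_del)
  have "x \<noteq> y" using yw nr by auto
  moreover have "\<not> adj G x y"
  proof
    assume "adj G x y"
    then have "adj (del_vertex G v) x y" using xv yv by (simp add: adj_del)
    then have "(adj (del_vertex G v))\<^sup>*\<^sup>* x w" using yw by auto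
    then show False using nr by simp
  qed
  ultimately show ?thesis by simp
qed

lemma sepC:
  assumes wf: "wf_graph G" and a: "adj G v x" and b: "adj G v y"
    and nr: "\<not> (adj (del_vertex G v))\<^sup>*\<^sup>* x y"
  shows "\<not> adj G x y"
proof
  assume "adj G x y"
  then have "adj (del_vertex G v) x y" using adj_wf[OF wf a] adj_wf[OF wf b] by (simp add: adj_del)
  then show False using nr by auto
qed

locale struc =
  fixes G :: graph and n :: nat and e :: "nat \<Rightarrow> nat" and l :: "nat \<Rightarrow> nat \<Rightarrow> nat"
  assumes wf: "wf_graph G"
    and eV: "\<And>i. i < n \<Longrightarrow> e i \<in> verts G"
    and einj: "\<And>i k. i < n \<Longrightarrow> k < n \<Longrightarrow> e i = e k \<Longrightarrow> i = k"
    and ladj: "\<And>i j. i < n \<Longrightarrow> j < n \<Longrightarrow> adj G (e i) (l i j)"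
    and linj: "\<And>i j j'. i < n \<Longrightarrow> j < n \<Longrightarrow> j' < n \<Longrightarrow> l i j = l i j' \<Longrightarrow> j = j'"
    and lsep: "\<And>i k j. i < n \<Longrightarrow> k < n \<Longrightarrow> j < n \<Longrightarrow> i \<noteq> k \<Longrightarrow>
                 \<not> (adj (del_vertex G (e i)))\<^sup>*\<^sup>* (l i j) (e k)"
    and lsep2: "\<And>i j j'. i < n \<Longrightarrow> j < n \<Longrightarrow> j' < n \<Longrightarrow> j \<noteq> j' \<Longrightarrow>
                 \<not> (adj (del_vertex G (e i)))\<^sup>*\<^sup>* (l i j) (l i j')"
begin

definition g :: "nat \<Rightarrow> nat \<Rightarrow> nat" where
  "g i a = (if a = 0 then e i else l i (a - 1))"

lemma gV: "i < n \<Longrightarrow> a \<le> n \<Longrightarrow> g i a \<in> verts G"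
  using eV ladj[of i "a-1"] by (auto simp: g_def adj_def)

lemma ginj:
  assumes "i < n" "k < n" "a \<le> n" "b \<le> n" "g i a = g k b"
  shows "i = k \<and> a = b"
proof (cases "a = 0")
  case a0: True
  show ?thesis
  proof (cases "b = 0")
    case True then show ?thesis using a0 assms einj by (auto simp: g_def)
  next
    case False
    have b1: "b - 1 < n" using assms False by simp
    have eq: "e i = l k (b-1)" using assms a0 False by (simp add: g_def)
    show ?thesis
    proof (cases "i = k")
      case True then show ?thesis using adj_wf[OF wf ladj[OF assms(2) b1]] eq by simp
    next
      case ik: False
      have ne: "e k \<noteq> e i" using einj assms ik by metis
      show ?thesis using sepA[OF wf ne ladj[OF assms(2) b1] lsep[OF assms(2) assms(1) b1 ik[symmetric]]] eq by simp
    qed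
  qed
next
  case a1: False
  show ?thesis
  proof (cases "b = 0")
    case True
    have a1': "a - 1 < n" using assms a1 by simp
    have eq: "e k = l i (a-1)" using assms a1 True by (simp add: g_def)
    show ?thesis
    proof (cases "i = k")
      case True then show ?thesis using adj_wf[OF wf ladj[OF assms(1) a1']] eq by simp
    next
      case ik: False
      have ne: "e i \<noteq> e k" using einj assms ik by metis
      show ?thesis using sepA[OF wf ne ladj[OF assms(1) a1'] lsep[OF assms(1) assms(2) a1' ik]] eq by simp
    qed
  next
    case False
    have eq: "l i (a-1) = l k (b-1)" using assms a1 False by (simp add: g_def)
    show ?thesis
    proof (cases "i = k")
      case True
      have ab: "a-1 < n" "b-1 < n" using assms a1 False by auto
      then have "a-1 = b-1" using linj[of i "a-1" "b-1"] eq True assms by auto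
      then show ?thesis using True a1 False by simp
    next
      case ik: False
      have "ei \<noteq> ek" if "ei = e i" "ek = e k" for ei ek using einj assms ik that by auto
      then show ?thesis
        using sepB[OF wf _ ladj[of i "a-1"] lsep[of i k "a-1"] ladj[of k "b-1"] lsep[of k i "b-1"]]
          eq assms a1 False ik by auto
    qed
  qed
qed

lemma gedge:
  assumes "i < n" "k < n" "a \<le> n" "b \<le> n"
  shows "{g i a, g k b} \<in> edges G \<longleftrightarrow>
     (i = k \<and> (a = 0) \<noteq> (b = 0)) \<or> (a = 0 \<and> b = 0 \<and> i \<noteq> k \<and> {e i, e k} \<in> edges G)"
proof -
  have ne: "e i \<noteq> e k" if "i \<noteq> k" using einj assms that by auto
  consider "a = 0" "b = 0" | "a = 0" "b \<noteq> 0" | "a \<noteq> 0" "b = 0" | "a \<noteq> 0" "b \<noteq> 0" by blast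
  then show ?thesis
  proof cases
    case 1
    then show ?thesis using adj_wf[OF wf, of "e i" "e i"] edge_adj[OF wf, of "e i" "e i"]
      by (auto simp: g_def)
  next
    case 2
    have "adj G (e k) (l k (b-1))" using ladj assms 2 by simp
    moreover have "i \<noteq> k \<Longrightarrow> \<not> adj G (l k (b-1)) (e i)"
      using sepA[OF wf ne[symmetric] ladj[of k "b-1"] lsep[of k i "b-1"]] assms 2 by auto
    ultimately show ?thesis using 2 edge_adj[OF wf] adj_sym[of G "e i" "l k (b-1)"] by (auto simp: g_def)
  next
    case 3
    have "adj G (e i) (l i (a-1))" using ladj assms 3 by simp
    then have "adj G (l i (a-1)) (e i)" by (rule adj_sym)
    moreover have "i \<noteq> k \<Longrightarrow> \<not> adj G (l i (a-1)) (e k)"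
      using sepA[OF wf ne ladj[of i "a-1"] lsep[of i k "a-1"]] assms 3 by auto
    ultimately show ?thesis using 3 edge_adj[OF wf] adj_sym[of G "l i (a-1)" "e k"] by (auto simp: g_def)
  next
    case 4
    have "\<not> adj G (l i (a-1)) (l k (b-1))"
    proof (cases "i = k")
      case True
      show ?thesis
      proof (cases "a = b")
        case True then show ?thesis using adj_wf[OF wf] \<open>i = k\<close> by auto
      next
        case False
        then show ?thesis using sepC[OF wf ladj[of i "a-1"] ladj[of i "b-1"] lsep2[of i "a-1" "b-1"]]
          assms 4 \<open>i = k\<close> by auto
      qed
    next
      case False
      then show ?thesis
        using sepB[OF wf ne ladj[of i "a-1"] lsep[of i k "a-1"] ladj[of k "b-1"] lsep[of k i "b-1"]]
          assms 4 by auto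
    qed
    then show ?thesis using 4 edge_adj[OF wf] by (auto simp: g_def)
  qed
qed

lemma emb_stars:
  assumes indep: "\<And>i k. i < n \<Longrightarrow> k < n \<Longrightarrow> i \<noteq> k \<Longrightarrow> {e i, e k} \<notin> edges G"
  shows "induced_sub (stars n) G"
  unfolding induced_sub_def
proof (intro exI[of _ "\<lambda>p. g (p div (n+1)) (p mod (n+1))"] conjI ballI)
  have dec: "p div (n+1) < n \<and> p mod (n+1) \<le> n" if "p \<in> verts (stars n)" for p
    using that by (auto simp: stars_def verts_def less_mult_imp_div_less less_Suc_eq_le)
  show "inj_on (\<lambda>p. g (p div (n + 1)) (p mod (n + 1))) (verts (stars n))"
  proof (rule inj_onI)
    fix p q assume pq: "p \<in> verts (stars n)" "q \<in> verts (stars n)"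
      "g (p div (n + 1)) (p mod (n + 1)) = g (q div (n + 1)) (q mod (n + 1))"
    then have "p div (n+1) = q div (n+1) \<and> p mod (n+1) = q mod (n+1)"
      using ginj dec by blast
    then show "p = q" by (metis div_mult_mod_eq)
  qed
  show "(\<lambda>p. g (p div (n + 1)) (p mod (n + 1))) ` verts (stars n) \<subseteq> verts G"
    using gV dec by auto
  fix u v assume uv: "u \<in> verts (stars n)" "v \<in> verts (stars n)"
  have "u < n*(n+1)" "v < n*(n+1)" using uv by (auto simp: stars_def verts_def)
  then show "({u, v} \<in> edges (stars n)) =
        ({g (u div (n + 1)) (u mod (n + 1)), g (v div (n + 1)) (v mod (n + 1))} \<in> edges G)"
    using stars_edge gedge[of "u div (n+1)" "v div (n+1)" "u mod (n+1)" "v mod (n+1)"] dec[OF uv(1)] dec[OF uv(2)]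
      indep[of "u div (n+1)" "v div (n+1)"] by auto
qed

lemma emb_Gn:
  assumes cliq: "\<And>i k. i < n \<Longrightarrow> k < n \<Longrightarrow> i \<noteq> k \<Longrightarrow> {e i, e k} \<in> edges G"
  shows "induced_sub (Gn n) G"
  unfolding induced_sub_def
proof (intro exI[of _ "\<lambda>p. g (if p < n then p else (p-n) div n) (if p < n then 0 else Suc ((p-n) mod n))"] conjI ballI)
  define ix where "ix p = (if p < n then p else (p-n) div n)" for p
  define ax where "ax p = (if p < n then 0 else Suc ((p-n) mod n))" for p
  have dec: "ix p < n \<and> ax p \<le> n" if "p \<in> verts (Gn n)" for p
  proof (cases "p < n")
    case True then show ?thesis by (simp add: ix_def ax_def)
  next
    case False
    have "p - n < n * n" using that False by (auto simp: Gn_def verts_def)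
    then have "(p-n) div n < n" "0 < n" by (auto simp: less_mult_imp_div_less intro: Nat.gr0I)
    then show ?thesis using False by (simp add: ix_def ax_def Suc_leI)
  qed
  have inj: "p = q" if "ix p = ix q" "ax p = ax q" for p q
    using that unfolding ix_def ax_def
    by (metis Suc_inject div_mult_mod_eq le_add_diff_inverse not_less nat.distinct(1))
  show "inj_on (\<lambda>p. g (if p < n then p else (p-n) div n) (if p < n then 0 else Suc ((p-n) mod n))) (verts (Gn n))"
  proof (rule inj_onI)
    fix p q assume pq: "p \<in> verts (Gn n)" "q \<in> verts (Gn n)"
      "g (if p < n then p else (p-n) div n) (if p < n then 0 else Suc ((p-n) mod n)) =
       g (if q < n then q else (q-n) div n) (if q < n then 0 else Suc ((q-n) mod n))"
    then have "g (ix p) (ax p) = g (ix q) (ax q)" by (simp add: ix_def ax_def)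
    then have "ix p = ix q \<and> ax p = ax q" using ginj dec pq by blast
    then show "p = q" using inj by blast
  qed
  show "(\<lambda>p. g (if p < n then p else (p-n) div n) (if p < n then 0 else Suc ((p-n) mod n))) ` verts (Gn n) \<subseteq> verts G"
    using gV dec unfolding ix_def ax_def by auto
  fix u v assume uv: "u \<in> verts (Gn n)" "v \<in> verts (Gn n)"
  have b: "u < n + n*n" "v < n + n*n" using uv by (auto simp: Gn_def verts_def)
  have "({u, v} \<in> edges (Gn n)) = ({g (ix u) (ax u), g (ix v) (ax v)} \<in> edges G)"
    unfolding Gn_edge[OF b] gedge[OF conjunct1[OF dec[OF uv(1)]] conjunct1[OF dec[OF uv(2)]]
       conjunct2[OF dec[OF uv(1)]] conjunct2[OF dec[OF uv(2)]]]
    using cliq[of "ix u" "ix v"] dec[OF uv(1)] dec[OF uv(2)] by (auto simp: ix_def ax_def)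
  then show "({u, v} \<in> edges (Gn n)) =
     ({g (if u < n then u else (u-n) div n) (if u < n then 0 else Suc ((u-n) mod n)),
       g (if v < n then v else (v-n) div n) (if v < n then 0 else Suc ((v-n) mod n))} \<in> edges G)"
    by (simp add: ix_def ax_def)
qed

end



lemma construct:
  assumes wf: "wf_graph G" and TV: "T \<subseteq> verts G" and finT: "finite T" and cT: "card T = n"
    and sd: "\<forall>t\<in>T. sdeg G t \<ge> int (2*n)"
  shows "\<exists>e l. struc G n e l \<and> (\<forall>i<n. e i \<in> T)"
proof -
  obtain e where e: "bij_betw e {0..<n} T" using ex_bij_betw_nat_finite[OF finT] cT by blast
  have eT: "e i \<in> T" if "i < n" for i using e that bij_betwE by fastforce
  have einj: "i = k" if "i < n" "k < n" "e i = e k" for i k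
    using e that unfolding bij_betw_def inj_on_def by auto
  have "\<forall>t\<in>T. \<exists>L. finite L \<and> card L \<ge> 2*n \<and> (\<forall>x\<in>L. adj G t x) \<and>
           (\<forall>x\<in>L. \<forall>y\<in>L. x \<noteq> y \<longrightarrow> \<not> (adj (del_vertex G t))\<^sup>*\<^sup>* x y)"
    using pick_leaves[OF wf] TV sd by blast
  then have "\<exists>Lf. \<forall>t\<in>T. finite (Lf t) \<and> card (Lf t) \<ge> 2*n \<and> (\<forall>x\<in>Lf t. adj G t x) \<and>
           (\<forall>x\<in>Lf t. \<forall>y\<in>Lf t. x \<noteq> y \<longrightarrow> \<not> (adj (del_vertex G t))\<^sup>*\<^sup>* x y)"
    by (rule bchoice)
  then obtain Lf where Lf0: "\<forall>t\<in>T. finite (Lf t) \<and> card (Lf t) \<ge> 2*n \<and> (\<forall>x\<in>Lf t. adj G t x) \<and>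
           (\<forall>x\<in>Lf t. \<forall>y\<in>Lf t. x \<noteq> y \<longrightarrow> \<not> (adj (del_vertex G t))\<^sup>*\<^sup>* x y)"
    by blast
  have Lf: "finite (Lf t) \<and> card (Lf t) \<ge> 2*n \<and> (\<forall>x\<in>Lf t. adj G t x) \<and>
           (\<forall>x\<in>Lf t. \<forall>y\<in>Lf t. x \<noteq> y \<longrightarrow> \<not> (adj (del_vertex G t))\<^sup>*\<^sup>* x y)" if "t \<in> T" for t
    using Lf0 that by (rule bspec)
  define L' where "L' t = {x \<in> Lf t. \<forall>w\<in>T-{t}. \<not> (adj (del_vertex G t))\<^sup>*\<^sup>* x w}" for t
  have cL': "card (L' t) \<ge> n" if tT: "t \<in> T" for t
  proof -
    define B where "B w = {x \<in> Lf t. (adj (del_vertex G t))\<^sup>*\<^sup>* x w}" for w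
    have finLf: "finite (Lf t)" using Lf tT by blast
    have sub: "Lf t - L' t \<subseteq> (\<Union>w\<in>T-{t}. B w)" unfolding L'_def B_def by blast
    have B1: "card (B w) \<le> 1" for w
    proof -
      have "finite (B w)" using finLf B_def by simp
      moreover have "\<forall>a1\<in>B w. \<forall>a2\<in>B w. a1 = a2"
      proof (intro ballI)
        fix a1 a2 assume a: "a1 \<in> B w" "a2 \<in> B w"
        then have "(adj (del_vertex G t))\<^sup>*\<^sup>* a1 a2"
          unfolding B_def using reach_sym[of "del_vertex G t" a2 w]
          by (auto intro: rtranclp_trans)
        moreover have "a1 \<in> Lf t" "a2 \<in> Lf t" using a unfolding B_def by simp_all
        ultimately show "a1 = a2" using conjunct2[OF conjunct2[OF conjunct2[OF Lf[OF tT]]]] by blast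
      qed
      ultimately show ?thesis using card_le_Suc0_iff_eq[of "B w"] by simp
    qed
    have "card (\<Union>w\<in>T-{t}. B w) \<le> (\<Sum>w\<in>T-{t}. card (B w))"
      using finT by (intro card_UN_le) simp
    also have "\<dots> \<le> (\<Sum>w\<in>T-{t}. 1)" using B1 by (intro sum_mono) simp
    also have "\<dots> = n - 1" using cT tT finT by simp
    finally have cU: "card (\<Union>w\<in>T-{t}. B w) \<le> n - 1" .
    have LL: "L' t \<subseteq> Lf t" by (auto simp: L'_def)
    have "finite (\<Union>w\<in>T-{t}. B w)" using finT finLf B_def by simp
    then have "card (Lf t - L' t) \<le> card (\<Union>w\<in>T-{t}. B w)" using sub by (rule card_mono)
    moreover have "card (Lf t - L' t) = card (Lf t) - card (L' t)"
      using LL finLf by (meson card_Diff_subset finite_subset)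
    moreover have "card (L' t) \<le> card (Lf t)" using LL finLf by (rule card_mono[rotated])
    moreover have "card (Lf t) \<ge> 2*n" using Lf tT by blast
    ultimately show ?thesis using cU by linarith
  qed
  have "\<forall>i\<in>{..<n}. \<exists>f. f ` {..<n} \<subseteq> L' (e i) \<and> inj_on f {..<n}"
  proof
    fix i assume "i \<in> {..<n}"
    then have tT: "e i \<in> T" using eT by simp
    have "finite (L' (e i))" using Lf[OF tT] L'_def by simp
    then show "\<exists>f. f ` {..<n} \<subseteq> L' (e i) \<and> inj_on f {..<n}"
      using card_le_inj[of "{..<n}" "L' (e i)"] cL'[OF tT] by simp
  qed
  then have "\<exists>l. \<forall>i\<in>{..<n}. l i ` {..<n} \<subseteq> L' (e i) \<and> inj_on (l i) {..<n}" by (rule bchoice)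
  then obtain l where l0: "\<forall>i\<in>{..<n}. l i ` {..<n} \<subseteq> L' (e i) \<and> inj_on (l i) {..<n}" by blast
  have l: "l i ` {..<n} \<subseteq> L' (e i) \<and> inj_on (l i) {..<n}" if "i < n" for i
    using l0 that by simp
  have lL: "l i j \<in> L' (e i)" if "i < n" "j < n" for i j using l[OF that(1)] that(2) by auto
  have "struc G n e l"
  proof
    show "wf_graph G" by (rule wf)
    show "e i \<in> verts G" if "i < n" for i using eT[OF that] TV by auto
    show "i = k" if "i < n" "k < n" "e i = e k" for i k using einj that by simp
    show "adj G (e i) (l i j)" if "i < n" "j < n" for i j
      using lL[OF that] Lf[OF eT[OF that(1)]] unfolding L'_def by blast
    show "j = j'" if "i < n" "j < n" "j' < n" "l i j = l i j'" for i j j'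
      using l[OF that(1)] that(2-4) unfolding inj_on_def by blast
    show "\<not> (adj (del_vertex G (e i)))\<^sup>*\<^sup>* (l i j) (e k)" if "i < n" "k < n" "j < n" "i \<noteq> k" for i k j
    proof -
      have "e k \<in> T - {e i}" using eT that einj by blast
      then show ?thesis using lL[OF that(1,3)] unfolding L'_def by blast
    qed
    show "\<not> (adj (del_vertex G (e i)))\<^sup>*\<^sup>* (l i j) (l i j')" if "i < n" "j < n" "j' < n" "j \<noteq> j'" for i j j'
    proof -
      have "l i j \<noteq> l i j'" using l[OF that(1)] that(2-4) unfolding inj_on_def by blast
      moreover have "l i j \<in> Lf (e i)" "l i j' \<in> Lf (e i)" using lL that unfolding L'_def by blast+
      ultimately show ?thesis using Lf[OF eT[OF that(1)]] by blast
    qed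
  qed
  then show ?thesis using eT by blast
qed



lemma star_center:
  assumes wf: "wf_graph G" and cV: "c \<in> verts G" and finL: "finite L"
    and adjL: "\<forall>x\<in>L. adj G c x" and only: "\<forall>x\<in>L. \<forall>z. adj G x z \<longrightarrow> z = c"
  shows "sdeg G c \<ge> int (card L)"
proof (rule leaves_sdeg[OF wf cV finL adjL], intro ballI impI)
  fix x y assume xy: "x \<in> L" "y \<in> L" "x \<noteq> y"
  show "\<not> (adj (del_vertex G c))\<^sup>*\<^sup>* x y"
  proof
    assume "(adj (del_vertex G c))\<^sup>*\<^sup>* x y"
    then show False
    proof (rule converse_rtranclpE)
      assume "x = y" then show False using xy by simp
    next
      fix z assume "adj (del_vertex G c) x z"
      then have "adj G x z" "z \<noteq> c" by (simp_all add: adj_del)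
      then show False using only xy(1) by blast
    qed
  qed
qed

lemma stars_many:
  assumes "c1 \<le> m"
  shows "card {v \<in> verts (stars m). sdeg (stars m) v \<ge> int c1} \<ge> m"
proof -
  let ?G = "stars m"
  have vs: "verts ?G = {0..<m*(m+1)}" by (simp add: stars_def verts_def)
  have adjG: "adj ?G p q \<longleftrightarrow> p < m*(m+1) \<and> q < m*(m+1) \<and>
      p div (m+1) = q div (m+1) \<and> ((p mod (m+1) = 0) \<noteq> (q mod (m+1) = 0))" for p q
    using stars_edge[of p m q] vs by (auto simp: adj_def)
  have sub: "(\<lambda>i. i*(m+1)) ` {..<m} \<subseteq> {v \<in> verts ?G. sdeg ?G v \<ge> int c1}"
  proof
    fix v assume "v \<in> (\<lambda>i. i*(m+1)) ` {..<m}"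
    then obtain i where i: "i < m" "v = i*(m+1)" by auto
    have cd: "v div (m+1) = i" "v mod (m+1) = 0" "v < m*(m+1)"
      using dm[of 0 "m+1" i] aux_lt[of i m 0 "m+1"] i by simp_all
    have vV: "v \<in> verts ?G" using cd vs by simp
    define k where "k = i*(m+1)"
    define L where "L = {k+1..k+m}"
    have cL: "card L = m" unfolding L_def by simp
    have Lx: "x < m*(m+1) \<and> x div (m+1) = i \<and> x mod (m+1) \<noteq> 0" if xL: "x \<in> L" for x
    proof -
      define j where "j = x - k"
      have j: "1 \<le> j" "j \<le> m" "x = k+j" using xL unfolding L_def j_def by auto
      have "(i*(m+1)+j) div (m+1) = i" "(i*(m+1)+j) mod (m+1) = j" using dm[of j "m+1" i] j(2) by simp_all
      then have "x div (m+1) = i" "x mod (m+1) = j" unfolding j(3) k_def by simp_all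
      moreover have "i*(m+1)+j < m*(m+1)" using aux_lt[of i m j "m+1"] i(1) j(2) by simp
      then have "x < m*(m+1)" unfolding j(3) k_def .
      ultimately show ?thesis using j(1) by simp
    qed
    have "sdeg ?G v \<ge> int (card L)"
    proof (rule star_center[OF wf_stars vV])
      show "finite L" using L_def by simp
      show "\<forall>x\<in>L. adj ?G v x"
      proof
        fix x assume "x \<in> L"
        then have "x < m*(m+1) \<and> x div (m+1) = i \<and> x mod (m+1) \<noteq> 0" by (rule Lx)
        then show "adj ?G v x" unfolding adjG using cd by simp
      qed
      show "\<forall>x\<in>L. \<forall>z. adj ?G x z \<longrightarrow> z = v"
      proof (intro ballI allI impI)
        fix x z assume xz: "x \<in> L" "adj ?G x z"
        have X: "x < m*(m+1) \<and> x div (m+1) = i \<and> x mod (m+1) \<noteq> 0" using xz(1) by (rule Lx)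
        have Z: "z < m*(m+1) \<and> x div (m+1) = z div (m+1) \<and> ((x mod (m+1) = 0) \<noteq> (z mod (m+1) = 0))"
          using xz(2) unfolding adjG by simp
        have zd: "z div (m+1) = i" "z mod (m+1) = 0" using X Z by simp_all
        have "z = (z div (m+1))*(m+1) + z mod (m+1)" by (rule div_mult_mod_eq[symmetric])
        then have "z = i*(m+1)" unfolding zd by simp
        then show "z = v" using i(2) by simp
      qed
    qed
    then have "int c1 \<le> sdeg ?G v" using cL assms by linarith
    then show "v \<in> {v \<in> verts ?G. sdeg ?G v \<ge> int c1}" using vV by simp
  qed
  have "inj_on (\<lambda>i. i*(m+1)) {..<m}"
  proof (rule inj_onI)
    fix a b assume ab: "a*(m+1) = b*(m+1)"
    have ne: "m + 1 \<noteq> (0::nat)" by simp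
    show "a = b" by (rule iffD1[OF mult_right_cancel[OF ne] ab])
  qed
  then have "card ((\<lambda>i. i*(m+1)) ` {..<m}) = m" by (simp add: card_image)
  moreover have "finite {v \<in> verts ?G. sdeg ?G v \<ge> int c1}" using vs by simp
  ultimately show ?thesis using card_mono[OF _ sub] by simp
qed

lemma Gn_many:
  assumes "c1 \<le> m"
  shows "card {v \<in> verts (Gn m). sdeg (Gn m) v \<ge> int c1} \<ge> m"
proof -
  let ?G = "Gn m"
  have vs: "verts ?G = {0..<m+m*m}" by (simp add: Gn_def verts_def)
  have adjG: "adj ?G p q \<longleftrightarrow> p < m+m*m \<and> q < m+m*m \<and>
      ((p < m \<and> q < m \<and> p \<noteq> q) \<or> (p < m \<and> m \<le> q \<and> (q-m) div m = p) \<or> (q < m \<and> m \<le> p \<and> (p-m) div m = q))" for p q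
    using Gn_edge[of p m q] vs by (auto simp: adj_def)
  have sub: "{..<m} \<subseteq> {v \<in> verts ?G. sdeg ?G v \<ge> int c1}"
  proof
    fix i assume i: "i \<in> {..<m}"
    then have im: "i < m" by simp
    have vV: "i \<in> verts ?G" using im vs by simp
    define L where "L = (\<lambda>j. m + i*m + j) ` {..<m}"
    have cL: "card L = m" unfolding L_def by (subst card_image) (auto simp: inj_on_def)
    have Lx: "x < m+m*m \<and> m \<le> x \<and> (x-m) div m = i" if xL: "x \<in> L" for x
    proof -
      obtain j where j: "j < m" "x = m + i*m + j" using xL unfolding L_def by blast
      then show ?thesis using dm[of j m i] aux_lt[of i m j m] im by simp
    qed
    have "sdeg ?G i \<ge> int (card L)"
    proof (rule star_center[OF wf_Gn vV])
      show "finite L" using L_def by simp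
      show "\<forall>x\<in>L. adj ?G i x" using Lx adjG im by auto
      show "\<forall>x\<in>L. \<forall>z. adj ?G x z \<longrightarrow> z = i"
      proof (intro ballI allI impI)
        fix x z assume xz: "x \<in> L" "adj ?G x z"
        have "x < m+m*m \<and> m \<le> x \<and> (x-m) div m = i" using Lx[OF xz(1)] .
        then show "z = i" using xz(2) adjG[of x z] by auto
      qed
    qed
    then show "i \<in> {v \<in> verts ?G. sdeg ?G v \<ge> int c1}" using cL assms vV by auto
  qed
  moreover have "finite {v \<in> verts ?G. sdeg ?G v \<ge> int c1}" using vs by simp
  ultimately show ?thesis using card_mono[OF _ sub] by simp
qed

theorem theorem1p14:
  fixes \<H> :: "graph set"
  assumes "\<forall>H\<in>\<H>. wf_graph H"
  shows "(\<exists>c1 c2 :: nat. \<forall>G. wf_graph G \<and> H_free \<H> G \<longrightarrow>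
            card {v \<in> verts G. sdeg G v \<ge> int c1} < c2)
         \<longleftrightarrow> (\<exists>n::nat. n > 0 \<and> fam_le \<H> {stars n, Gn n})"
proof
  assume "\<exists>c1 c2 :: nat. \<forall>G. wf_graph G \<and> H_free \<H> G \<longrightarrow>
            card {v \<in> verts G. sdeg G v \<ge> int c1} < c2"
  then obtain c1 c2 :: nat where P: "\<And>G. wf_graph G \<Longrightarrow> H_free \<H> G \<Longrightarrow>
            card {v \<in> verts G. sdeg G v \<ge> int c1} < c2" by blast
  show "\<exists>n::nat. n > 0 \<and> fam_le \<H> {stars n, Gn n}"
  proof (rule ccontr)
    assume na: "\<not> (\<exists>n::nat. n > 0 \<and> fam_le \<H> {stars n, Gn n})"
    define m where "m = max c1 c2 + 1"
    have "\<not> fam_le \<H> {stars m, Gn m}" using na m_def by auto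
    then have "H_free \<H> (stars m) \<or> H_free \<H> (Gn m)"
      unfolding fam_le_def H_free_def by blast
    then show False
    proof
      assume "H_free \<H> (stars m)"
      then have "card {v \<in> verts (stars m). sdeg (stars m) v \<ge> int c1} < c2" using P wf_stars by blast
      moreover have "card {v \<in> verts (stars m). sdeg (stars m) v \<ge> int c1} \<ge> m"
        using stars_many m_def by simp
      ultimately show False using m_def by simp
    next
      assume "H_free \<H> (Gn m)"
      then have "card {v \<in> verts (Gn m). sdeg (Gn m) v \<ge> int c1} < c2" using P wf_Gn by blast
      moreover have "card {v \<in> verts (Gn m). sdeg (Gn m) v \<ge> int c1} \<ge> m"
        using Gn_many m_def by simp
      ultimately show False using m_def by simp
    qed
  qed
next
  assume "\<exists>n::nat. n > 0 \<and> fam_le \<H> {stars n, Gn n}"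
  then obtain n where n: "n > 0" "fam_le \<H> {stars n, Gn n}" by blast
  obtain H1 where H1: "H1 \<in> \<H>" "induced_sub H1 (stars n)" using n(2) unfolding fam_le_def by blast
  obtain H2 where H2: "H2 \<in> \<H>" "induced_sub H2 (Gn n)" using n(2) unfolding fam_le_def by blast
  obtain r where r: "\<forall>(V::nat set) (E::nat set set). finite V \<and> card V \<ge> r \<longrightarrow>
    (\<exists>R \<subseteq> V. card R = n \<and> clique R E \<or> card R = n \<and> indep R E)"
    using ramsey2[of n n] by blast
  show "\<exists>c1 c2 :: nat. \<forall>G. wf_graph G \<and> H_free \<H> G \<longrightarrow>
            card {v \<in> verts G. sdeg G v \<ge> int c1} < c2"
  proof (intro exI allI impI)
    fix G assume GG: "wf_graph G \<and> H_free \<H> G"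
    then have wf: "wf_graph G" and hf: "H_free \<H> G" by auto
    define S where "S = {v \<in> verts G. sdeg G v \<ge> int (2*n)}"
    have finS: "finite S" using wf S_def by (simp add: wf_graph_def)
    show "card {v \<in> verts G. sdeg G v \<ge> int (2*n)} < r"
    proof (rule ccontr)
      assume "\<not> card {v \<in> verts G. sdeg G v \<ge> int (2*n)} < r"
      then have "card S \<ge> r" using S_def by simp
      then obtain R where R: "R \<subseteq> S" "card R = n" "clique R (edges G) \<or> indep R (edges G)"
        using r finS by blast
      have RV: "R \<subseteq> verts G" using R(1) S_def by auto
      have finR: "finite R" using R(1) finS finite_subset by blast
      have sdR: "\<forall>t\<in>R. sdeg G t \<ge> int (2*n)" using R(1) S_def by auto
      obtain e l where el: "struc G n e l" "\<forall>i<n. e i \<in> R"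
        using construct[OF wf RV finR R(2) sdR] by blast
      have ne: "e i \<noteq> e k" if "i < n" "k < n" "i \<noteq> k" for i k
        using struc.einj[OF el(1)] that by blast
      from R(3) show False
      proof
        assume "clique R (edges G)"
        then have "induced_sub (Gn n) G"
          using struc.emb_Gn[OF el(1)] el(2) ne unfolding clique_def by blast
        then have "induced_sub H2 G" using H2(2) induced_trans by blast
        then show False using hf H2(1) unfolding H_free_def by blast
      next
        assume "indep R (edges G)"
        then have "induced_sub (stars n) G"
          using struc.emb_stars[OF el(1)] el(2) ne unfolding indep_def by blast
        then have "induced_sub H1 G" using H1(2) induced_trans by blast
        then show False using hf H1(1) unfolding H_free_def by blast
      qed
    qed
  qed
qed


end
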